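(* Let $q=2^f$ with $f\ge4$, let $q_0<q$ be a power of $2$ with $\gcd(q-1,q_0^2-1)=1$, let $u\in\mathbb{F}_q\setminus\{0,1\}$, and define $\eta=1+\left(\frac{u}{u+1}\right)^{1/(q_0-1)}$. Then for all $a,b\in\mathbb{F}_q^*$: (1) $\Phi_{a,ua^{q_0+1}}\xrightarrow{u}\Phi_{b,ub^{q_0+1}}$ iff $b=a/\eta$; (2) $\Phi_{a,ua^{q_0+1}}\xrightarrow{u+1}\Phi_{b,ub^{q_0+1}}$ iff $b=a\eta$; (3) $\Phi_{a,(u+1)a^{q_0+1}}\xrightarrow{u}\Phi_{b,(u+1)b^{q_0+1}}$ iff $b=a\cdot\frac{\eta}{1+\eta}$; (4) $\Phi_{a,(u+1)a^{q_0+1}}\xrightarrow{u+1}\Phi_{b,(u+1)b^{q_0+1}}$ iff $b=a\cdot\frac{1+\eta}{\eta}$; (5) $\Phi_{a,ua^{q_0+1}}\xrightarrow{u}\Phi_{b,(u+1)b^{q_0+1}}$ iff $b=\frac{a}{1+\eta}$; (6) $\Phi_{a,ua^{q_0+1}}\xrightarrow{u+1}\Phi_{b,(u+1)b^{q_0+1}}$ iff $\left(\frac ab\right)^{q_0+1}+u\left(\frac ab\right)^{q_0}+(u+1)\frac ab+1=0$.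
   Context: For $a,c\in\mathbb{F}_q$ let $\Phi_{a,c}=\begin{bmatrix}1&0&0\\ a&1&0\\ c&a^{q_0}&1\end{bmatrix}$, $K=\{\Phi_{a,c}\}\le GL(3,\mathbb{F}_q)$, and for $v\in\mathbb{F}_q$ let $\Omega_v=\{\Phi_{a,va^{q_0+1}}: a\in\mathbb{F}_q^*\}$. For $x,y\in K$ and $v\in\mathbb{F}_q$ write $x\xrightarrow{v}y$ if $xy^{-1}\in\Omega_v$. The $(q_0-1)$-th root is the inverse of the bijection $x\mapsto x^{q_0-1}$ of $\mathbb{F}_q$ (a bijection since $\gcd(q_0-1,q-1)=1$). *)

theory Defs
  imports "HOL-Analysis.Analysis"
begin

definition Phi :: "nat \<Rightarrow> 'a::field \<Rightarrow> 'a \<Rightarrow> 'a^3^3" where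
  "Phi q0 a c = vector [vector [1, 0, 0], vector [a, 1, 0], vector [c, a ^ q0, 1]]"

definition Kgrp :: "nat \<Rightarrow> ('a::field^3^3) set" where
  "Kgrp q0 = {Phi q0 a c | a c. True}"

definition Omega :: "nat \<Rightarrow> 'a::field \<Rightarrow> ('a^3^3) set" where
  "Omega q0 v = {Phi q0 a (v * a ^ (q0 + 1)) | a. a \<noteq> 0}"

definition arrow :: "nat \<Rightarrow> 'a::field \<Rightarrow> 'a^3^3 \<Rightarrow> 'a^3^3 \<Rightarrow> bool" where
  "arrow q0 v x y \<longleftrightarrow> x ** matrix_inv y \<in> Omega q0 v"

definition root_q0 :: "nat \<Rightarrow> 'a::field \<Rightarrow> 'a" where
  "root_q0 q0 x = (THE y. y ^ (q0 - 1) = x)"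

end

theory Submission
  imports Defs
begin


lemma fermat_fin:
  fixes x :: "'a::{field,finite}"
  assumes "x \<noteq> 0"
  shows "x ^ (CARD('a) - 1) = 1"
proof -
  have "(\<Prod>y\<in>UNIV-{0}. x * y) = x ^ (CARD('a) - 1) * \<Prod>(UNIV-{0::'a})"
    by (simp add: prod.distrib card_Diff_singleton)
  also have "(\<Prod>y\<in>UNIV-{0}. x * y) = (\<Prod>y\<in>UNIV-{0::'a}. y)"
    by (rule prod.reindex_bij_witness[of _ "\<lambda>y. y / x" "\<lambda>y. x * y"]) (use assms in auto)
  finally have "1 * \<Prod>(UNIV-{0::'a}) = x ^ (CARD('a) - 1) * \<Prod>(UNIV-{0::'a})" by simp
  moreover have "\<Prod>(UNIV-{0::'a}) \<noteq> 0" by simp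
  ultimately show ?thesis by (metis mult_right_cancel)
qed

lemma char2:
  assumes "CARD('a::{field,finite}) = 2 ^ f" "f \<ge> 1"
  shows "(2::'a) = 0"
proof -
  have "(-1::'a) ^ (CARD('a) - 1) = 1" by (rule fermat_fin) simp
  moreover have "odd (CARD('a) - 1)" using assms by (simp add: odd_pos)
  ultimately have "(-1::'a) = 1" by simp
  then show ?thesis by (metis one_add_one add.right_inverse) 
qed

lemma frob:
  fixes x y :: "'a::field"
  assumes "(2::'a) = 0"
  shows "(x + y) ^ (2 ^ k) = x ^ (2 ^ k) + y ^ (2 ^ k)"
proof (induction k)
  case 0 then show ?case by simp
next
  case (Suc k)
  have sq: "(A + B)^2 = A^2 + B^2" for A B :: 'a
    using assms by (simp add: power2_eq_square algebra_simps mult_2[symmetric])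
  have "(x + y) ^ (2 ^ Suc k) = ((x+y)^(2^k))^2" by (simp add: power_mult[symmetric] mult.commute)
  also have "\<dots> = (x^(2^k))^2 + (y^(2^k))^2" using Suc sq by simp
  also have "\<dots> = x ^ (2 ^ Suc k) + y ^ (2 ^ Suc k)" by (simp add: power_mult[symmetric] mult.commute)
  finally show ?case .
qed

lemma Phi_mult:
  fixes a b c d :: "'a::field"
  assumes "(a + b) ^ q0 = a ^ q0 + b ^ q0"
  shows "Phi q0 a c ** Phi q0 b d = Phi q0 (a + b) (c + d + a ^ q0 * b)"
  using assms
  by (simp add: Phi_def matrix_matrix_mult_def vec_eq_iff forall_3 sum_3 algebra_simps)

lemma Phi_inj: "Phi q0 a c = Phi q0 b d \<longleftrightarrow> a = b \<and> c = d"
proof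
  assume "Phi q0 a c = Phi q0 b d"
  then have "Phi q0 a c $ 2 $ 1 = Phi q0 b d $ 2 $ 1" "Phi q0 a c $ 3 $ 1 = Phi q0 b d $ 3 $ 1" by auto
  then show "a = b \<and> c = d" by (simp add: Phi_def)
qed simp

lemma Phi_one: "q0 > 0 \<Longrightarrow> Phi q0 (0::'a::field) 0 = mat 1"
  by (simp add: Phi_def mat_def vec_eq_iff forall_3)

lemma matrix_inv_eqI:
  fixes A B :: "'a::comm_ring_1^'n^'n"
  assumes "A ** B = mat 1" "B ** A = mat 1"
  shows "matrix_inv A = B"
proof -
  let ?C = "matrix_inv A"
  have C: "A ** ?C = mat 1 \<and> ?C ** A = mat 1"
    unfolding matrix_inv_def by (rule someI[of _ B]) (use assms in auto)
  have "?C = ?C ** (A ** B)" using assms by (simp add: matrix_mul_rid)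
  also have "\<dots> = (?C ** A) ** B" by (simp add: matrix_mul_assoc)
  also have "\<dots> = B" using C by (simp add: matrix_mul_lid)
  finally show ?thesis .
qed




lemma char2_neg: "(2::'a::field) = 0 \<Longrightarrow> - z = (z::'a)"
  by (metis add_eq_0_iff mult_2 mult_zero_left)

lemma char2_add_self: "(2::'a::field) = 0 \<Longrightarrow> z + z = (0::'a)"
  by (metis mult_2 mult_zero_left)

lemma Phi_inv:
  fixes b d :: "'a::field"
  assumes two: "(2::'a) = 0" and fr: "\<And>x y::'a. (x + y) ^ q0 = x ^ q0 + y ^ q0" and q0: "q0 > 0"
  shows "matrix_inv (Phi q0 b d) = Phi q0 b (d + b ^ (q0 + 1))"
proof (rule matrix_inv_eqI)
  have bb: "b + b = 0" using char2_add_self[OF two] .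
  have e0: "d + (d + b ^ (q0 + 1)) + b ^ q0 * b = (d + d) + (b ^ (q0 + 1) + b ^ (q0 + 1))"
    by (simp add: algebra_simps power_Suc2)
  have e: "d + (d + b ^ (q0 + 1)) + b ^ q0 * b = 0"
    unfolding e0 char2_add_self[OF two] by simp
  have e2: "(d + b ^ (q0 + 1)) + d + b ^ q0 * b = 0"
    using e by (simp add: algebra_simps)
  show "Phi q0 b d ** Phi q0 b (d + b ^ (q0 + 1)) = mat 1"
    by (simp only: Phi_mult[OF fr] bb e Phi_one[OF q0])
  show "Phi q0 b (d + b ^ (q0 + 1)) ** Phi q0 b d = mat 1"
    by (simp only: Phi_mult[OF fr] bb e2 Phi_one[OF q0])
qed

lemma arrow_char:
  fixes a b c d v :: "'a::field"
  assumes two: "(2::'a) = 0" and fr: "\<And>x y::'a. (x + y) ^ q0 = x ^ q0 + y ^ q0" and q0: "q0 > 0"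
  shows "arrow q0 v (Phi q0 a c) (Phi q0 b d) \<longleftrightarrow>
     a \<noteq> b \<and> c + (d + b ^ (q0 + 1)) + a ^ q0 * b = v * (a + b) ^ (q0 + 1)"
proof -
  have ab: "a + b = 0 \<longleftrightarrow> a = b"
    by (metis add_eq_0_iff char2_neg[OF two])
  show ?thesis
    unfolding arrow_def Omega_def Phi_inv[OF two fr q0] Phi_mult[OF fr]
    using ab by (auto simp: Phi_inj)
qed

lemma arrow_ratio:
  fixes a b s r v :: "'a::field"
  assumes two: "(2::'a) = 0" and fr: "\<And>x y::'a. (x + y) ^ q0 = x ^ q0 + y ^ q0" and q0: "q0 > 0"
    and a: "a \<noteq> 0" and b: "b \<noteq> 0"
  shows "arrow q0 v (Phi q0 a (s * a ^ (q0 + 1))) (Phi q0 b (r * b ^ (q0 + 1))) \<longleftrightarrow>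
     a / b \<noteq> 1 \<and> s * (a/b)^q0 * (a/b) + r + 1 + (a/b)^q0 = v * ((a/b)^q0 + 1) * (a/b + 1)"
proof -
  define x where "x = a / b"
  define B where "B = b ^ (q0 + 1)"
  have ax: "a = x * b" using b by (simp add: x_def)
  have B0: "B \<noteq> 0" using b by (simp add: B_def)
  have ne: "a \<noteq> b \<longleftrightarrow> x \<noteq> 1" using b by (simp add: x_def)
  have "(x + 1) ^ q0 = x ^ q0 + 1" using fr[of x 1] by simp
  have "s * a ^ (q0 + 1) + (r * b ^ (q0 + 1) + b ^ (q0 + 1)) + a ^ q0 * b
      = B * (s * x^q0 * x + r + 1 + x^q0)"
    by (simp add: ax B_def power_mult_distrib algebra_simps)
  moreover have "v * (a + b) ^ (q0 + 1) = B * (v * (x^q0 + 1) * (x + 1))"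
  proof -
    have "a + b = (x + 1) * b" by (simp add: ax algebra_simps)
    then have "(a + b) ^ (q0 + 1) = (x+1)^(q0+1) * B"
      by (simp only: B_def power_mult_distrib)
    then have "(a + b) ^ (q0 + 1) = (x+1)^q0 * (x+1) * B" by simp
    then show ?thesis using \<open>(x + 1) ^ q0 = x ^ q0 + 1\<close> by (simp add: algebra_simps)
  qed
  ultimately show ?thesis
    unfolding arrow_char[OF two fr q0] ne x_def[symmetric] using B0 by auto
qed




lemma c2iff:
  fixes A B C D :: "'a::field"
  assumes two: "(2::'a) = 0" and e: "A + B = C + D"
  shows "(A = B) \<longleftrightarrow> (C = D)"
proof -
  have "\<And>X Y::'a. X = Y \<longleftrightarrow> X + Y = 0"
    by (metis add_eq_0_iff char2_neg[OF two])
  then show ?thesis using e by metis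
qed

lemma two_mult: "(2::'a::field) = 0 \<Longrightarrow> 2 * w = (0::'a)" "(2::'a::field) = 0 \<Longrightarrow> w * 2 = (0::'a)"
  by auto

lemma case1:
  fixes u R x :: "'a::field"
  assumes two: "(2::'a) = 0" and fr: "\<And>x y::'a. (x + y) ^ q0 = x ^ q0 + y ^ q0" and q0: "q0 > 0"
    and u1: "u + 1 \<noteq> 0" and Rm: "R ^ (q0 - 1) = u / (u + 1)"
    and Runiq: "\<And>y. y ^ (q0 - 1) = u / (u + 1) \<Longrightarrow> y = R" and R0: "R \<noteq> 0"
    and x0: "x \<noteq> 0"
  shows "(x \<noteq> 1 \<and> u * x^q0 * x + u + 1 + x^q0 = u * (x^q0 + 1) * (x + 1)) \<longleftrightarrow> x = 1 + R"
proof -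
  have pw: "\<And>y::'a. y ^ q0 = y * y ^ (q0 - 1)" using q0 by (metis Suc_diff_1 power_Suc)
  have t: "\<And>w::'a. 2 * w = 0" "\<And>w::'a. w * 2 = 0" using two by auto
  have E: "(u * x^q0 * x + u + 1 + x^q0 = u * (x^q0 + 1) * (x + 1)) \<longleftrightarrow> (x^q0 * (1 + u) = u * x + 1)"
    by (rule c2iff[OF two]) (simp add: algebra_simps t)
  show ?thesis
  proof
    assume H: "x \<noteq> 1 \<and> u * x^q0 * x + u + 1 + x^q0 = u * (x^q0 + 1) * (x + 1)"
    define y where "y = x + 1"
    have xy: "x = y + 1" unfolding y_def add.assoc one_add_one two by simp
    have y0: "y \<noteq> 0" using H by (metis xy add_0)
    have P: "x ^ q0 = y * y^(q0-1) + 1" using fr[of y 1] pw[of y] xy by simp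
    have "(y * y^(q0-1) + 1) * (1 + u) = u * (y + 1) + 1" using H E P xy by simp
    moreover have "((y * y^(q0-1) + 1) * (1 + u) = u * (y + 1) + 1) \<longleftrightarrow> (y * y^(q0-1) * (1 + u) = u * y)"
      by (rule c2iff[OF two]) (simp add: algebra_simps t, rule two)
    ultimately have "y * y^(q0-1) * (1 + u) = u * y" by simp
    then have "y^(q0-1) * (1 + u) = u" using y0 by (simp add: mult.assoc)
    then have "y^(q0-1) = u / (u + 1)" using u1 by (simp add: field_simps add.commute)
    then have "y = R" by (rule Runiq)
    then show "x = 1 + R" using xy by (simp add: add.commute)
  next
    assume xR: "x = 1 + R"
    have "x \<noteq> 1" using xR R0 by simp
    moreover have "x ^ q0 * (1 + u) = u * x + 1"
    proof -
      have "x ^ q0 = 1 + R * (u / (u + 1))" using xR fr[of 1 R] pw[of R] Rm by simp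
      then show ?thesis using xR u1 by (simp add: field_simps add.commute)
    qed
    ultimately show "x \<noteq> 1 \<and> u * x^q0 * x + u + 1 + x^q0 = u * (x^q0 + 1) * (x + 1)" using E by simp
  qed
qed




lemma aux2: fixes u S W :: "'a::field" assumes "S \<noteq> 0" "W \<noteq> 0" "u * S = (u + 1) * W + 1"
  shows "u * (1 / W) = 1 / S * (u + 1 / W + 1)"
proof -
  have "u * (1 / W) = (u * S) / (S * W)" using assms(1,2) by simp
  also have "\<dots> = ((u + 1) * W + 1) / (S * W)" using assms(3) by simp
  also have "\<dots> = 1 / S * (u + 1 / W + 1)" using assms by (simp add: field_simps)
  finally show ?thesis .
qed

lemma aux3: fixes u S V W R :: "'a::field" assumes S: "S \<noteq> 0" and V: "V \<noteq> 0" and key: "W * (R + (1 + u) * S) = u * R * V"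
  shows "W / V * (R / S + 1 + u) = u * (R / S)"
proof -
  have "W / V * (R / S + 1 + u) = (W * (R + (1 + u) * S)) / (V * S)" using S V by (simp add: field_simps)
  also have "\<dots> = (u * R * V) / (V * S)" using key by simp
  also have "\<dots> = u * (R / S)" using V by simp
  finally show ?thesis .
qed

lemma aux4: fixes u S V W R :: "'a::field" assumes R: "R \<noteq> 0" and W: "W \<noteq> 0" and key: "u * V * R = (u + 1) * S * W + R * W"
  shows "u * (V / W) = (u + 1) * (S / R) + 1"
proof -
  have "u * (V / W) = (u * V * R) / (W * R)" using R by simp
  also have "\<dots> = ((u + 1) * S * W + R * W) / (W * R)" using key by simp
  also have "\<dots> = (u + 1) * (S / R) + 1" using R W by (simp add: field_simps)
  finally show ?thesis .
qed

locale setting =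
  fixes u R :: "'a::field" and q0 :: nat
  assumes two: "(2::'a) = 0" and fr: "\<And>x y::'a. (x + y) ^ q0 = x ^ q0 + y ^ q0" and q0: "q0 > 0"
    and u1: "u + 1 \<noteq> 0" and Rm: "R ^ (q0 - 1) = u / (u + 1)"
    and Runiq: "\<And>y. y ^ (q0 - 1) = u / (u + 1) \<Longrightarrow> y = R" and R0: "R \<noteq> 0" and R1: "R \<noteq> 1"
begin

lemma t: "\<And>w::'a. 2 * w = 0" "\<And>w::'a. w * 2 = 0" using two by auto

lemma three: "(3::'a) = 1"
proof -
  have "(3::'a) = 2 + 1" by simp
  then show ?thesis using two by simp
qed

lemma pw: "y ^ q0 = y * y ^ (q0 - 1)" using q0 by (metis Suc_diff_1 power_Suc)

lemma solveR: assumes "t \<noteq> 0" "t ^ q0 * (1 + u) = u * t" shows "t = R"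
proof -
  have "t^(q0-1) * (1 + u) = u" using assms by (simp add: pw mult.assoc)
  then have "t^(q0-1) = u / (u + 1)" using u1 by (simp add: field_simps add.commute)
  then show ?thesis by (rule Runiq)
qed

lemma W: "R ^ q0 * (u + 1) = R * u"
  using Rm u1 by (simp add: pw)

lemma one_plus_self: "1 + (1 + z) = (z::'a)"
  unfolding add.assoc[symmetric] one_add_one two by simp

lemma pp: "z + 1 + 1 = (z::'a)"
  unfolding add.assoc one_add_one two by simp

lemma uW: "u * R ^ q0 = R * u + R ^ q0"
proof -
  have "u * R ^ q0 = R ^ q0 * (u + 1) + R ^ q0" using pp[of "u * R ^ q0"] by (simp add: algebra_simps)
  then show ?thesis using W by simp
qed

lemma R1': "1 + R \<noteq> 0"
  using R1 by (metis add_eq_0_iff char2_neg[OF two])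

lemma case2:
  assumes x0: "x \<noteq> 0"
  shows "(x \<noteq> 1 \<and> u * x^q0 * x + u + 1 + x^q0 = (u + 1) * (x^q0 + 1) * (x + 1)) \<longleftrightarrow> x = 1 / (1 + R)"
proof -
  have E: "(u * x^q0 * x + u + 1 + x^q0 = (u + 1) * (x^q0 + 1) * (x + 1)) \<longleftrightarrow> (u * x^q0 = x * (u + x^q0 + 1))"
    by (rule c2iff[OF two]) (simp add: algebra_simps t; (rule two three)?)
  show ?thesis
  proof
    assume H: "x \<noteq> 1 \<and> u * x^q0 * x + u + 1 + x^q0 = (u + 1) * (x^q0 + 1) * (x + 1)"
    define y where "y = 1 / x + 1"
    have x1: "x = 1 / (y + 1)" unfolding y_def add.assoc one_add_one two using x0 by simp
    have y1: "y + 1 \<noteq> 0" using x1 x0 by auto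
    have y0: "y \<noteq> 0" using H x1 by auto
    have P: "x ^ q0 = 1 / (y ^ q0 + 1)" using x1 fr[of y 1] by (simp add: power_divide)
    have yq: "y ^ q0 + 1 \<noteq> 0" using y1 fr[of y 1] by (metis power_not_zero power_one)
    have "u * (1 / (y ^ q0 + 1)) = 1 / (y + 1) * (u + 1 / (y ^ q0 + 1) + 1)"
      using H E P x1 by simp
    then have "u * (y + 1) = (u + 1) * (y ^ q0 + 1) + 1"
    proof -
      assume h: "u * (1 / (y ^ q0 + 1)) = 1 / (y + 1) * (u + 1 / (y ^ q0 + 1) + 1)"
      have "u * (y + 1) = (y + 1) * (y ^ q0 + 1) * (u * (1 / (y ^ q0 + 1)))" using yq by simp
      also have "\<dots> = (y + 1) * (y ^ q0 + 1) * (1 / (y + 1) * (u + 1 / (y ^ q0 + 1) + 1))" using h by simp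
      also have "\<dots> = (y ^ q0 + 1) * (u + 1 / (y ^ q0 + 1) + 1)" using y1 by simp
      also have "\<dots> = (u + 1) * (y ^ q0 + 1) + 1" using yq by (simp add: algebra_simps)
      finally show ?thesis .
    qed
    moreover have "(u * (y + 1) = (u + 1) * (y ^ q0 + 1) + 1) \<longleftrightarrow> (y ^ q0 * (1 + u) = u * y)"
      by (rule c2iff[OF two]) (simp add: algebra_simps t; (rule two three)?)
    ultimately have "y = R" using solveR y0 by blast
    then show "x = 1 / (1 + R)" using x1 by (simp add: add.commute)
  next
    assume xR: "x = 1 / (1 + R)"
    have "x \<noteq> 1" using xR R0 R1' by (auto simp: field_simps)
    moreover have "u * x^q0 = x * (u + x^q0 + 1)"
    proof -
      have Wq: "1 + R ^ q0 \<noteq> 0" using R1' fr[of 1 R] by (metis power_not_zero power_one)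
      have P: "x ^ q0 = 1 / (1 + R ^ q0)" using xR fr[of 1 R] by (simp add: power_divide)
      have "(u + 1) * (1 + R ^ q0) + 1 = u * (1 + R)"
        using W two by (simp add: algebra_simps)
      then show ?thesis unfolding P unfolding xR using aux2[OF R1' Wq] by simp
    qed
    ultimately show "x \<noteq> 1 \<and> u * x^q0 * x + u + 1 + x^q0 = (u + 1) * (x^q0 + 1) * (x + 1)" using E by simp
  qed
qed

lemma case5:
  assumes x0: "x \<noteq> 0"
  shows "(x \<noteq> 1 \<and> u * x^q0 * x + (u + 1) + 1 + x^q0 = u * (x^q0 + 1) * (x + 1)) \<longleftrightarrow> x = R"
proof -
  have E: "(u * x^q0 * x + (u + 1) + 1 + x^q0 = u * (x^q0 + 1) * (x + 1)) \<longleftrightarrow> (x^q0 * (1 + u) = u * x)"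
    by (rule c2iff[OF two]) (simp add: algebra_simps t; (rule two three)?)
  show ?thesis
  proof
    assume H: "x \<noteq> 1 \<and> u * x^q0 * x + (u + 1) + 1 + x^q0 = u * (x^q0 + 1) * (x + 1)"
    then show "x = R" using E solveR x0 by blast
  next
    assume xR: "x = R"
    then show "x \<noteq> 1 \<and> u * x^q0 * x + (u + 1) + 1 + x^q0 = u * (x^q0 + 1) * (x + 1)"
      using E W R1 by (simp add: algebra_simps)
  qed
qed

lemma case6:
  assumes x0: "x \<noteq> 0"
  shows "(x \<noteq> 1 \<and> u * x^q0 * x + (u + 1) + 1 + x^q0 = (u + 1) * (x^q0 + 1) * (x + 1)) \<longleftrightarrow>
     x ^ (q0 + 1) + u * x ^ q0 + (u + 1) * x + 1 = 0"
proof -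
  have E: "(u * x^q0 * x + (u + 1) + 1 + x^q0 = (u + 1) * (x^q0 + 1) * (x + 1)) \<longleftrightarrow>
     (x ^ (q0 + 1) + u * x ^ q0 + (u + 1) * x + 1 = 0)"
    by (rule c2iff[OF two]) (simp add: algebra_simps t; (rule two three)?)
  have n1: "\<not> (1 ^ (q0 + 1) + u * 1 ^ q0 + (u + 1) * 1 + 1 = (0::'a))"
  proof -
    have "1 ^ (q0 + 1) + u * 1 ^ q0 + (u + 1) * 1 + 1 = (1::'a) + (u + u) + (1 + 1)" by (simp add: algebra_simps)
    also have "\<dots> = 1" by (simp only: char2_add_self[OF two] add_0_right)
    finally have h: "1 ^ (q0 + 1) + u * 1 ^ q0 + (u + 1) * 1 + 1 = (1::'a)" .
    show ?thesis unfolding h by simp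
  qed
  show ?thesis using E n1 by auto
qed

lemma case3:
  assumes x0: "x \<noteq> 0"
  shows "(x \<noteq> 1 \<and> (u + 1) * x^q0 * x + (u + 1) + 1 + x^q0 = u * (x^q0 + 1) * (x + 1)) \<longleftrightarrow> x = R / (1 + R)"
proof -
  have E: "((u + 1) * x^q0 * x + (u + 1) + 1 + x^q0 = u * (x^q0 + 1) * (x + 1)) \<longleftrightarrow> (x^q0 * (x + 1 + u) = u * x)"
    by (rule c2iff[OF two]) (simp add: algebra_simps t; (rule two three)?)
  show ?thesis
  proof
    assume H: "x \<noteq> 1 \<and> (u + 1) * x^q0 * x + (u + 1) + 1 + x^q0 = u * (x^q0 + 1) * (x + 1)"
    then have E3: "x^q0 * (x + 1 + u) = u * x" using E by simp
    have x1: "x + 1 \<noteq> 0" using H by (metis add_eq_0_iff char2_neg[OF two])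
    have P1: "x ^ q0 + 1 \<noteq> 0" using x1 fr[of x 1] by (metis power_not_zero power_one)
    define t where "t = x / (x + 1)"
    have t0: "t \<noteq> 0" using x0 x1 by (simp add: t_def)
    have tq: "t ^ q0 = x ^ q0 / (x ^ q0 + 1)" using fr[of x 1] by (simp add: t_def power_divide)
    have cross: "(x ^ q0 * (1 + u)) * (x + 1) = (u * x) * (x ^ q0 + 1)"
    proof -
      have "(x ^ q0 * (1 + u)) * (x + 1) = x^q0 * (x + 1 + u) + u * x * x ^ q0" by (simp add: algebra_simps)
      then show ?thesis using E3 by (simp add: algebra_simps)
    qed
    have "t ^ q0 * (1 + u) = u * t"
    proof -
      have a1: "t ^ q0 * (1 + u) = (x^q0 * (1 + u)) / (x^q0 + 1)" by (simp add: tq)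
      have a2: "u * t = (u * x) / (x + 1)" by (simp add: t_def)
      show ?thesis unfolding a1 a2 frac_eq_eq[OF P1 x1] using cross .
    qed
    then have tR: "t = R" using solveR t0 by blast
    have "t + 1 = 1 / (x + 1)"
    proof -
      have "t + 1 = (x + (x + 1)) / (x + 1)" using x1 by (simp add: t_def field_simps)
      also have "x + (x + 1) = 1" using char2_add_self[OF two, of x] by (simp add: add.assoc[symmetric])
      finally show ?thesis .
    qed
    then have "x = t / (t + 1)" using x1 by (simp add: t_def)
    then show "x = R / (1 + R)" using tR by (simp add: add.commute)
  next
    assume xR: "x = R / (1 + R)"
    have "x \<noteq> 1" using xR R1' by (auto simp: field_simps)
    moreover have "x^q0 * (x + 1 + u) = u * x"
    proof -
      have V: "1 + R ^ q0 \<noteq> 0" using R1' fr[of 1 R] by (metis power_not_zero power_one)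
      have P: "x ^ q0 = R ^ q0 / (1 + R ^ q0)" using xR fr[of 1 R] by (simp add: power_divide)
      have key: "R ^ q0 * (R + (1 + u) * (1 + R)) = u * R * (1 + R ^ q0)"
      proof -
        have "R ^ q0 * (R + (1 + u) * (1 + R)) = R ^ q0 * R + (R ^ q0 * (u + 1)) * (1 + R)"
          by (simp add: algebra_simps)
        also have "\<dots> = R ^ q0 * R + R * u * (1 + R)" using W by simp
        also have "\<dots> = u * R + R * (u * R ^ q0)"
          unfolding uW by (simp add: algebra_simps)
        finally show ?thesis by (simp add: algebra_simps)
      qed
      show ?thesis unfolding P unfolding xR by (rule aux3[OF R1' V key])
    qed
    ultimately show "x \<noteq> 1 \<and> (u + 1) * x^q0 * x + (u + 1) + 1 + x^q0 = u * (x^q0 + 1) * (x + 1)" using E by simp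
  qed
qed

lemma case4:
  assumes x0: "x \<noteq> 0"
  shows "(x \<noteq> 1 \<and> (u + 1) * x^q0 * x + (u + 1) + 1 + x^q0 = (u + 1) * (x^q0 + 1) * (x + 1)) \<longleftrightarrow> x = (1 + R) / R"
proof -
  have E: "((u + 1) * x^q0 * x + (u + 1) + 1 + x^q0 = (u + 1) * (x^q0 + 1) * (x + 1)) \<longleftrightarrow> (u * x^q0 = (u + 1) * x + 1)"
    by (rule c2iff[OF two]) (simp add: algebra_simps t; (rule two three)?)
  show ?thesis
  proof
    assume H: "x \<noteq> 1 \<and> (u + 1) * x^q0 * x + (u + 1) + 1 + x^q0 = (u + 1) * (x^q0 + 1) * (x + 1)"
    then have E4: "u * x^q0 = (u + 1) * x + 1" using E by simp
    have x1: "x + 1 \<noteq> 0" using H by (metis add_eq_0_iff char2_neg[OF two])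
    have P1: "x ^ q0 + 1 \<noteq> 0" using x1 fr[of x 1] by (metis power_not_zero power_one)
    define t where "t = 1 / (x + 1)"
    have t0: "t \<noteq> 0" using x1 by (simp add: t_def)
    have tq: "t ^ q0 = 1 / (x ^ q0 + 1)" using fr[of x 1] by (simp add: t_def power_divide)
    have cross: "(1 + u) * (x + 1) = u * (x ^ q0 + 1)"
      using E4 by (simp add: algebra_simps)
    have "t ^ q0 * (1 + u) = u * t"
    proof -
      have a1: "t ^ q0 * (1 + u) = (1 + u) / (x^q0 + 1)" by (simp add: tq)
      have a2: "u * t = u / (x + 1)" by (simp add: t_def)
      show ?thesis unfolding a1 a2 frac_eq_eq[OF P1 x1] using cross by simp
    qed
    then have tR: "t = R" using solveR t0 by blast
    have "x = (x + 1) + 1" using pp[of x] by (simp add: add.assoc)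
    also have "x + 1 = 1 / t" using x1 by (simp add: t_def)
    finally show "x = (1 + R) / R" using tR R0 by (simp add: field_simps add.commute)
  next
    assume xR: "x = (1 + R) / R"
    have "x \<noteq> 1" using xR R0 by (auto simp: field_simps)
    moreover have "u * x^q0 = (u + 1) * x + 1"
    proof -
      have W0: "R ^ q0 \<noteq> 0" using R0 by simp
      have P: "x ^ q0 = (1 + R ^ q0) / R ^ q0" using xR fr[of 1 R] by (simp add: power_divide)
      have key: "u * (1 + R ^ q0) * R = (u + 1) * (1 + R) * R ^ q0 + R * R ^ q0"
      proof -
        have "u * (1 + R ^ q0) * R = u * R + R * (u * R ^ q0)" by (simp add: algebra_simps)
        also have "\<dots> = u * R + R * (R * u + R ^ q0)" unfolding uW ..
        also have "\<dots> = (R * u) * (1 + R) + R * R ^ q0" by (simp add: algebra_simps)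
        also have "\<dots> = (R ^ q0 * (u + 1)) * (1 + R) + R * R ^ q0" by (simp only: W)
        also have "\<dots> = (u + 1) * (1 + R) * R ^ q0 + R * R ^ q0" by (simp add: algebra_simps)
        finally show ?thesis .
      qed
      show ?thesis unfolding P unfolding xR by (rule aux4[OF R0 W0 key])
    qed
    ultimately show "x \<noteq> 1 \<and> (u + 1) * x^q0 * x + (u + 1) + 1 + x^q0 = (u + 1) * (x^q0 + 1) * (x + 1)" using E by simp
  qed
qed

end



lemma pow_inj:
  fixes x y :: "'a::{field,finite}"
  assumes cop: "coprime n (CARD('a) - 1)" and n: "n > 0" and e: "x ^ n = y ^ n"
  shows "x = y"
proof (cases "x = 0 \<or> y = 0")
  case True
  then have "x = 0 \<and> y = 0"
  proof
    assume "x = 0" then have "y ^ n = 0" using e n zero_power[OF n, where 'a='a] by simp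
    then show ?thesis using \<open>x = 0\<close> by simp
  next
    assume "y = 0" then have "x ^ n = 0" using e n zero_power[OF n, where 'a='a] by simp
    then show ?thesis using \<open>y = 0\<close> by simp
  qed
  then show ?thesis by simp
next
  case False
  define z where "z = x / y"
  have z0: "z \<noteq> 0" using False by (simp add: z_def)
  have zn: "z ^ n = 1" using e False by (simp add: z_def power_divide)
  obtain i j where ij: "n * i = (CARD('a) - 1) * j + gcd n (CARD('a) - 1)"
    using bezout_nat[of n "CARD('a) - 1"] n by auto
  have g: "gcd n (CARD('a) - 1) = 1" using cop by simp
  have ij': "n * i = (CARD('a) - 1) * j + 1" using ij g by simp
  have "1 = (z ^ n) ^ i" using zn by simp
  also have "\<dots> = z ^ (n * i)" by (simp add: power_mult)
  also have "\<dots> = z ^ ((CARD('a) - 1) * j + 1)" by (simp only: ij')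
  also have "\<dots> = (z ^ (CARD('a) - 1)) ^ j * z" by (simp add: power_mult power_add)
  also have "\<dots> = z" using fermat_fin[OF z0] by simp
  finally have "z = 1" by simp
  then show ?thesis using False by (simp add: z_def)
qed

lemma root_props:
  fixes c :: "'a::{field,finite}"
  assumes cop: "coprime n (CARD('a) - 1)" and n: "n > 0" and q: "n = q0 - 1"
  shows "root_q0 q0 c ^ n = c" "\<And>y. y ^ n = c \<Longrightarrow> y = root_q0 q0 c"
proof -
  have inj: "inj (\<lambda>x::'a. x ^ n)" unfolding inj_def using pow_inj[OF cop n] by blast
  have "surj (\<lambda>x::'a. x ^ n)" using finite_UNIV_inj_surj[of "\<lambda>x::'a. x ^ n"] inj by simp
  then have "\<exists>y0. c = y0 ^ n" unfolding surj_def by blast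
  then obtain y0 where "y0 ^ n = c" by auto
  then have ex: "\<exists>!y. y ^ n = c" using pow_inj[OF cop n] by blast
  have rd: "root_q0 q0 c = (THE y. y ^ n = c)" unfolding root_q0_def q ..
  show "root_q0 q0 c ^ n = c" unfolding rd using theI'[OF ex] .
  show "y = root_q0 q0 c" if "y ^ n = c" for y unfolding rd
    by (rule the1_equality[OF ex that, symmetric])
qed

lemma div_iff1: fixes a b e :: "'a::field" assumes "a \<noteq> 0" "b \<noteq> 0" "e \<noteq> 0"
  shows "b = a / e \<longleftrightarrow> a / b = e"
  using assms by (auto simp: field_simps)
lemma div_iff2: fixes a b e :: "'a::field" assumes "a \<noteq> 0" "b \<noteq> 0" "e \<noteq> 0"
  shows "b = a * e \<longleftrightarrow> a / b = 1 / e"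
  using assms by (auto simp: field_simps)
lemma div_iff3: fixes a b p r :: "'a::field" assumes "a \<noteq> 0" "b \<noteq> 0" "p \<noteq> 0" "r \<noteq> 0"
  shows "b = a * (p / r) \<longleftrightarrow> a / b = r / p"
  using assms by (auto simp: field_simps)

theorem lemma6p1:
  fixes u :: "'a::{field, finite}" and f q0 :: nat
  assumes q: "CARD('a) = 2 ^ f" and f4: "f \<ge> 4"
    and q0pow: "\<exists>k. q0 = 2 ^ k" and q0lt: "q0 < CARD('a)"
    and gcd: "gcd (CARD('a) - 1) (q0\<^sup>2 - 1) = 1"
    and u0: "u \<noteq> 0" and u1: "u \<noteq> 1"
  defines "\<eta> \<equiv> 1 + root_q0 q0 (u / (u + 1))"
  shows "\<forall>a b. a \<noteq> 0 \<longrightarrow> b \<noteq> 0 \<longrightarrow>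
     (arrow q0 u (Phi q0 a (u * a ^ (q0 + 1))) (Phi q0 b (u * b ^ (q0 + 1))) \<longleftrightarrow> b = a / \<eta>) \<and>
     (arrow q0 (u + 1) (Phi q0 a (u * a ^ (q0 + 1))) (Phi q0 b (u * b ^ (q0 + 1))) \<longleftrightarrow> b = a * \<eta>) \<and>
     (arrow q0 u (Phi q0 a ((u + 1) * a ^ (q0 + 1))) (Phi q0 b ((u + 1) * b ^ (q0 + 1)))
        \<longleftrightarrow> b = a * (\<eta> / (1 + \<eta>))) \<and>
     (arrow q0 (u + 1) (Phi q0 a ((u + 1) * a ^ (q0 + 1))) (Phi q0 b ((u + 1) * b ^ (q0 + 1)))
        \<longleftrightarrow> b = a * ((1 + \<eta>) / \<eta>)) \<and>
     (arrow q0 u (Phi q0 a (u * a ^ (q0 + 1))) (Phi q0 b ((u + 1) * b ^ (q0 + 1)))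
        \<longleftrightarrow> b = a / (1 + \<eta>)) \<and>
     (arrow q0 (u + 1) (Phi q0 a (u * a ^ (q0 + 1))) (Phi q0 b ((u + 1) * b ^ (q0 + 1)))
        \<longleftrightarrow> (a / b) ^ (q0 + 1) + u * (a / b) ^ q0 + (u + 1) * (a / b) + 1 = 0)"
proof -
  have two: "(2::'a) = 0" using char2[OF q] f4 by simp
  obtain k where k: "q0 = 2 ^ k" using q0pow by blast
  have fr: "\<And>x y::'a. (x + y) ^ q0 = x ^ q0 + y ^ q0" unfolding k by (rule frob[OF two])
  have k0: "k \<noteq> 0"
  proof
    assume "k = 0"
    then have "q0 = 1" using k by simp
    then have "CARD('a) - 1 = 1" using gcd by simp
    moreover have "(16::nat) \<le> 2 ^ f" using power_increasing[OF f4, of "2::nat"] by simp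
    ultimately show False using q by simp
  qed
  have q02: "q0 \<ge> 2"
  proof -
    have "(2::nat) ^ 1 \<le> 2 ^ k" using k0 by (intro power_increasing) auto
    then show ?thesis using k by simp
  qed
  have q0p: "q0 > 0" using q02 by simp
  have cop: "coprime (q0 - 1) (CARD('a) - 1)"
  proof -
    have "q0\<^sup>2 - 1 = (q0 - 1) * (q0 + 1)" using q02
      by (simp add: power2_eq_square algebra_simps)
    then have "coprime (CARD('a) - 1) ((q0 - 1) * (q0 + 1))" using gcd by (simp only: coprime_iff_gcd_eq_1)
    then have "coprime (CARD('a) - 1) (q0 - 1)" by (simp only: coprime_mult_right_iff)
    then show ?thesis by (simp only: coprime_commute)
  qed
  have n0: "q0 - 1 > 0" using q02 by simp
  have u1': "u + 1 \<noteq> 0" using u1 by (metis add_eq_0_iff char2_neg[OF two])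
  define R where "R = root_q0 q0 (u / (u + 1))"
  have Rm: "R ^ (q0 - 1) = u / (u + 1)" unfolding R_def by (rule root_props(1)[OF cop n0 refl])
  have Runiq: "\<And>y. y ^ (q0 - 1) = u / (u + 1) \<Longrightarrow> y = R" unfolding R_def by (rule root_props(2)[OF cop n0 refl])
  have R0: "R \<noteq> 0"
  proof
    assume "R = 0"
    then have "u / (u + 1) = 0" using Rm n0 by (simp add: zero_power)
    then show False using u0 u1' by simp
  qed
  have R1: "R \<noteq> 1"
  proof
    assume "R = 1"
    then have "u / (u + 1) = 1" using Rm by simp
    then have "u = u + 1" using u1' by (simp add: field_simps)
    then show False by simp
  qed
  interpret S: setting u R q0 by (rule setting.intro) (fact two, fact fr, fact q0p, fact u1', fact Rm, fact Runiq, fact R0, fact R1)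
  have eta: "\<eta> = 1 + R" unfolding \<eta>_def R_def ..
  have eta1: "1 + \<eta> = R" unfolding eta using S.pp[of R] by (simp add: add.commute add.left_commute)
  have eta0: "\<eta> \<noteq> 0" unfolding eta by (rule S.R1')
  show ?thesis
  proof (intro allI impI)
    fix a b :: 'a
    assume a: "a \<noteq> 0" and b: "b \<noteq> 0"
    have x0: "a / b \<noteq> 0" using a b by simp
    note AR = arrow_ratio[OF two fr q0p a b]
    have eta10: "1 + \<eta> \<noteq> 0" unfolding eta1 by (rule R0)
    have c1: "b = a / \<eta> \<longleftrightarrow> a / b = 1 + R" unfolding div_iff1[OF a b eta0] unfolding eta by (rule refl)
    have c2: "b = a * \<eta> \<longleftrightarrow> a / b = 1 / (1 + R)" unfolding div_iff2[OF a b eta0] unfolding eta by (rule refl)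
    have c3: "b = a * (\<eta> / (1 + \<eta>)) \<longleftrightarrow> a / b = R / (1 + R)"
      unfolding div_iff3[OF a b eta0 eta10] unfolding eta1 unfolding eta by (rule refl)
    have c4: "b = a * ((1 + \<eta>) / \<eta>) \<longleftrightarrow> a / b = (1 + R) / R"
      unfolding div_iff3[OF a b eta10 eta0] unfolding eta1 unfolding eta by (rule refl)
    have c5: "b = a / (1 + \<eta>) \<longleftrightarrow> a / b = R" unfolding div_iff1[OF a b eta10] unfolding eta1 by (rule refl)
    have h1: "arrow q0 u (Phi q0 a (u * a ^ (q0 + 1))) (Phi q0 b (u * b ^ (q0 + 1))) \<longleftrightarrow> b = a / \<eta>"
      unfolding AR c1 by (rule case1[OF two fr q0p u1' Rm Runiq R0 x0])
    have h2: "arrow q0 (u + 1) (Phi q0 a (u * a ^ (q0 + 1))) (Phi q0 b (u * b ^ (q0 + 1))) \<longleftrightarrow> b = a * \<eta>"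
      unfolding AR c2 by (rule S.case2[OF x0])
    have h3: "arrow q0 u (Phi q0 a ((u + 1) * a ^ (q0 + 1))) (Phi q0 b ((u + 1) * b ^ (q0 + 1)))
        \<longleftrightarrow> b = a * (\<eta> / (1 + \<eta>))"
      unfolding AR c3 by (rule S.case3[OF x0])
    have h4: "arrow q0 (u + 1) (Phi q0 a ((u + 1) * a ^ (q0 + 1))) (Phi q0 b ((u + 1) * b ^ (q0 + 1)))
        \<longleftrightarrow> b = a * ((1 + \<eta>) / \<eta>)"
      unfolding AR c4 by (rule S.case4[OF x0])
    have h5: "arrow q0 u (Phi q0 a (u * a ^ (q0 + 1))) (Phi q0 b ((u + 1) * b ^ (q0 + 1)))
        \<longleftrightarrow> b = a / (1 + \<eta>)"
      unfolding AR c5 by (rule S.case5[OF x0])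
    have h6: "arrow q0 (u + 1) (Phi q0 a (u * a ^ (q0 + 1))) (Phi q0 b ((u + 1) * b ^ (q0 + 1)))
        \<longleftrightarrow> (a / b) ^ (q0 + 1) + u * (a / b) ^ q0 + (u + 1) * (a / b) + 1 = 0"
      unfolding AR by (rule S.case6[OF x0])
    show "(arrow q0 u (Phi q0 a (u * a ^ (q0 + 1))) (Phi q0 b (u * b ^ (q0 + 1))) \<longleftrightarrow> b = a / \<eta>) \<and>
     (arrow q0 (u + 1) (Phi q0 a (u * a ^ (q0 + 1))) (Phi q0 b (u * b ^ (q0 + 1))) \<longleftrightarrow> b = a * \<eta>) \<and>
     (arrow q0 u (Phi q0 a ((u + 1) * a ^ (q0 + 1))) (Phi q0 b ((u + 1) * b ^ (q0 + 1)))
        \<longleftrightarrow> b = a * (\<eta> / (1 + \<eta>))) \<and>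
     (arrow q0 (u + 1) (Phi q0 a ((u + 1) * a ^ (q0 + 1))) (Phi q0 b ((u + 1) * b ^ (q0 + 1)))
        \<longleftrightarrow> b = a * ((1 + \<eta>) / \<eta>)) \<and>
     (arrow q0 u (Phi q0 a (u * a ^ (q0 + 1))) (Phi q0 b ((u + 1) * b ^ (q0 + 1)))
        \<longleftrightarrow> b = a / (1 + \<eta>)) \<and>
     (arrow q0 (u + 1) (Phi q0 a (u * a ^ (q0 + 1))) (Phi q0 b ((u + 1) * b ^ (q0 + 1)))
        \<longleftrightarrow> (a / b) ^ (q0 + 1) + u * (a / b) ^ q0 + (u + 1) * (a / b) + 1 = 0)"
      using h1 h2 h3 h4 h5 h6 by (intro conjI)
  qed
qed


end
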